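(* Let $P,Q\in\Gamma_n$ with $P\ne Q$, and $0<r\le R$ with $r\le p_i/q_i\le R$ for all $i$. Then $$r\le\frac{\chi^2(P\|Q)^{2/3}}{4\,h(P\|Q)^{2/3}}\le R.$$
   Context: $\Gamma_n=\{P=(p_1,\dots,p_n): p_i>0,\ \sum_i p_i=1\}$, $n\ge2$. $\chi^2(P\|Q)=\sum_i\frac{(p_i-q_i)^2}{q_i}$ and $h(P\|Q)=\frac12\sum_i(\sqrt{p_i}-\sqrt{q_i})^2$ (Hellinger discrimination). *)

theory Defs
  imports Complex_Main
begin

definition Gamma :: "nat \<Rightarrow> (nat \<Rightarrow> real) set" where
  "Gamma n = {p. (\<forall>i<n. p i > 0) \<and> (\<Sum>i<n. p i) = 1}"

definition chi2 :: "nat \<Rightarrow> (nat \<Rightarrow> real) \<Rightarrow> (nat \<Rightarrow> real) \<Rightarrow> real" where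
  "chi2 n p q = (\<Sum>i<n. (p i - q i)^2 / q i)"

definition hellinger :: "nat \<Rightarrow> (nat \<Rightarrow> real) \<Rightarrow> (nat \<Rightarrow> real) \<Rightarrow> real" where
  "hellinger n p q = (1/2) * (\<Sum>i<n. (sqrt (p i) - sqrt (q i))^2)"

end

theory Submission
  imports Defs
begin

lemma sq_id:
  fixes p q :: real assumes "p > 0" "q > 0"
  shows "(p - q)^2 / q = (sqrt p - sqrt q)^2 * ((sqrt p + sqrt q)^2 / q)"
proof -
  have "p - q = (sqrt p - sqrt q) * (sqrt p + sqrt q)"
    using assms by (simp add: algebra_simps)
  then show ?thesis by (simp add: power_mult_distrib)
qed

lemma term_lower:
  fixes p q r :: real assumes "p > 0" "q > 0" "r > 0" "r \<le> 1" "r \<le> p / q"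
  shows "4 * r * (sqrt p - sqrt q)^2 \<le> (p - q)^2 / q"
proof -
  have "r * q \<le> p" using assms(2,5) by (simp add: pos_le_divide_eq)
  hence "sqrt (r*q) \<le> sqrt p" by simp
  hence a: "sqrt r * sqrt q \<le> sqrt p" by (simp add: real_sqrt_mult)
  have "r \<le> sqrt r"
  proof -
    have s1: "sqrt r \<le> 1" using assms(3,4) by simp
    have "r = sqrt r * sqrt r" using assms(3) by simp
    also have "\<dots> \<le> sqrt r * 1" by (rule mult_left_mono[OF s1]) (use assms(3) in simp)
    finally show ?thesis by simp
  qed
  hence "r * sqrt q \<le> sqrt r * sqrt q" by (rule mult_right_mono) (use assms(2) in simp)
  hence b: "r * sqrt q \<le> sqrt p" using a by linarith
  have c: "0 \<le> r * sqrt q + sqrt q" using assms(2,3) by simp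
  have d: "r * sqrt q + sqrt q \<le> sqrt p + sqrt q" using b by linarith
  have e: "(r * sqrt q + sqrt q)^2 \<le> (sqrt p + sqrt q)^2"
    by (rule power_mono[OF d c])
  have f: "(r * sqrt q + sqrt q)^2 = (r+1)^2 * q" using assms(2) by (simp add: algebra_simps power2_eq_square)
  have g: "4 * r \<le> (r+1)^2"
  proof -
    have "0 \<le> (r - 1)^2" by simp
    thus ?thesis by (simp add: power2_eq_square algebra_simps)
  qed
  have "4 * r * q \<le> (r+1)^2 * q" by (rule mult_right_mono[OF g]) (use assms(2) in simp)
  hence "4 * r * q \<le> (sqrt p + sqrt q)^2" using e f by linarith
  hence X: "4 * r \<le> (sqrt p + sqrt q)^2 / q" using assms(2) by (simp add: pos_le_divide_eq)
  have "4 * r * (sqrt p - sqrt q)^2 = (sqrt p - sqrt q)^2 * (4 * r)" by simp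
  also have "\<dots> \<le> (sqrt p - sqrt q)^2 * ((sqrt p + sqrt q)^2 / q)"
    by (rule mult_left_mono[OF X]) simp
  also have "\<dots> = (p - q)^2 / q" by (rule sq_id[OF assms(1,2), symmetric])
  finally show ?thesis .
qed

lemma term_upper:
  fixes p q R :: real assumes "p > 0" "q > 0" "R \<ge> 1" "p / q \<le> R"
  shows "(p - q)^2 / q \<le> 4 * R * (sqrt p - sqrt q)^2"
proof -
  have "p \<le> R * q" using assms by (simp add: pos_divide_le_eq)
  hence "sqrt p \<le> sqrt (R*q)" by simp
  hence a: "sqrt p \<le> sqrt R * sqrt q" by (simp add: real_sqrt_mult)
  have "1 \<le> sqrt R" using assms by simp
  have "(sqrt p + sqrt q)^2 \<le> (sqrt R * sqrt q + sqrt q)^2"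
    using assms a by (intro power_mono) auto
  moreover have "(sqrt R * sqrt q + sqrt q)^2 = (sqrt R + 1)^2 * q"
    using assms by (simp add: algebra_simps power2_eq_square)
  moreover have "(sqrt R + 1)^2 \<le> 4 * R"
  proof -
    have "sqrt R + 1 \<le> 2 * sqrt R" using \<open>1 \<le> sqrt R\<close> by simp
    hence "(sqrt R + 1)^2 \<le> (2 * sqrt R)^2" by (intro power_mono) auto
    thus ?thesis using assms by (simp add: power_mult_distrib)
  qed
  ultimately have X: "(sqrt p + sqrt q)^2 / q \<le> 4 * R" using assms
    by (simp add: pos_divide_le_eq) (smt (verit) mult_right_mono less_imp_le)
  have "(p - q)^2 / q = (sqrt p - sqrt q)^2 * ((sqrt p + sqrt q)^2 / q)" by (rule sq_id[OF assms(1,2)])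
  also have "\<dots> \<le> (sqrt p - sqrt q)^2 * (4 * R)" using X by (intro mult_left_mono) auto
  finally show ?thesis by (simp add: mult.commute)
qed

lemma eight_powr: "(8::real) powr (2/3) = 4"
proof -
  have "(8::real) = 2 powr 3" by simp
  hence "(8::real) powr (2/3) = 2 powr (3 * (2/3))" by (simp add: powr_powr)
  also have "\<dots> = 4" by simp
  finally show ?thesis .
qed

theorem mainTheorem14:
  fixes n :: nat and p q :: "nat \<Rightarrow> real" and r R :: real
  assumes "n \<ge> 2"
    and "p \<in> Gamma n" and "q \<in> Gamma n"
    and "\<exists>i<n. p i \<noteq> q i"
    and "0 < r" and "r \<le> R"
    and "\<forall>i<n. r \<le> p i / q i \<and> p i / q i \<le> R"
  shows "r \<le> chi2 n p q powr (2/3) / (4 * hellinger n p q powr (2/3))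
       \<and> chi2 n p q powr (2/3) / (4 * hellinger n p q powr (2/3)) \<le> R"
proof -
  have pp: "\<And>i. i < n \<Longrightarrow> p i > 0" and sp: "(\<Sum>i<n. p i) = 1"
    using assms(2) by (auto simp: Gamma_def)
  have qp: "\<And>i. i < n \<Longrightarrow> q i > 0" and sq: "(\<Sum>i<n. q i) = 1"
    using assms(3) by (auto simp: Gamma_def)
  have rb: "\<And>i. i < n \<Longrightarrow> r * q i \<le> p i" using assms(7) qp by (simp add: pos_le_divide_eq)
  have Rb: "\<And>i. i < n \<Longrightarrow> p i \<le> R * q i" using assms(7) qp by (simp add: pos_divide_le_eq)
  have "r = (\<Sum>i<n. r * q i)" by (simp add: sum_distrib_left[symmetric] sq)
  also have "\<dots> \<le> (\<Sum>i<n. p i)" by (rule sum_mono) (simp add: rb)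
  finally have r1: "r \<le> 1" using sp by simp
  have "1 = (\<Sum>i<n. p i)" using sp by simp
  also have "\<dots> \<le> (\<Sum>i<n. R * q i)" by (rule sum_mono) (simp add: Rb)
  finally have R1: "1 \<le> R" by (simp add: sum_distrib_left[symmetric] sq)
  define S where "S = (\<Sum>i<n. (sqrt (p i) - sqrt (q i))^2)"
  have hS: "hellinger n p q = S / 2" by (simp add: hellinger_def S_def)
  obtain j where j: "j < n" "p j \<noteq> q j" using assms(4) by blast
  have "(sqrt (p j) - sqrt (q j))^2 > 0" using j pp qp by simp
  moreover have "(sqrt (p j) - sqrt (q j))^2 \<le> S" unfolding S_def
    by (rule member_le_sum) (use j in auto)
  ultimately have Spos: "S > 0" by linarith
  have lo: "8 * r * (S/2) \<le> chi2 n p q"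
  proof -
    have "8 * r * (S/2) = (\<Sum>i<n. 4 * r * (sqrt (p i) - sqrt (q i))^2)"
      by (simp add: S_def sum_distrib_left sum_distrib_right mult.assoc)
    also have "\<dots> \<le> chi2 n p q" unfolding chi2_def
      by (rule sum_mono) (use pp qp assms(5) r1 assms(7) term_lower in auto)
    finally show ?thesis .
  qed
  have hi: "chi2 n p q \<le> 8 * R * (S/2)"
  proof -
    have "chi2 n p q \<le> (\<Sum>i<n. 4 * R * (sqrt (p i) - sqrt (q i))^2)" unfolding chi2_def
      by (rule sum_mono) (use pp qp R1 assms(7) term_upper in auto)
    also have "\<dots> = 8 * R * (S/2)" by (simp add: S_def sum_distrib_left sum_distrib_right mult.assoc)
    finally show ?thesis .
  qed
  define h where "h = S/2"
  have hpos: "h > 0" using Spos by (simp add: h_def)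
  have hp: "h powr (2/3) > 0" using hpos by simp
  have "4 * r * h powr (2/3) \<le> 4 * r powr (2/3) * h powr (2/3)"
  proof -
    have "r powr 1 \<le> r powr (2/3)" using r1 assms(5) by (intro powr_mono') auto
    thus ?thesis using hp assms(5) by simp
  qed
  also have "\<dots> = (8 * r * h) powr (2/3)"
    using assms(5) hpos by (simp add: powr_mult eight_powr)
  also have "\<dots> \<le> chi2 n p q powr (2/3)"
    using lo assms(5) hpos by (intro powr_mono2) (auto simp: h_def)
  finally have L: "4 * r * h powr (2/3) \<le> chi2 n p q powr (2/3)" .
  have "chi2 n p q powr (2/3) \<le> (8 * R * h) powr (2/3)"
    using hi lo assms(5) hpos by (intro powr_mono2) (auto simp: h_def intro: order_trans[rotated])
  also have "\<dots> = 4 * R powr (2/3) * h powr (2/3)"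
    using R1 hpos by (simp add: powr_mult eight_powr)
  also have "\<dots> \<le> 4 * R * h powr (2/3)"
  proof -
    have "R powr (2/3) \<le> R powr 1" using R1 by (intro powr_mono) auto
    thus ?thesis using hp R1 by simp
  qed
  finally have U: "chi2 n p q powr (2/3) \<le> 4 * R * h powr (2/3)" .
  have hh: "hellinger n p q = h" by (simp add: hS h_def)
  show ?thesis unfolding hh using L U hp
    by (simp add: pos_le_divide_eq pos_divide_le_eq mult.commute mult.left_commute)
qed

end
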